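(* Let $f:\mathbb{R}^n\times\mathbb{R}\to\mathbb{R}^n$ be $C^1$, let $\lambda_-<\lambda_+$, let $\Lambda$ be a parameter shift from $\lambda_-$ to $\lambda_+$, and let $r>0$. Let $\Phi$ be the solution cocycle of $\dot x=f(x,\Lambda(rt))$ and $\phi_-$ the flow of $\dot x=f(x,\lambda_-)$. Assume $A_-$ is an asymptotically stable attractor for $\phi_-$. For $\eta>0$ and $t\in\mathbb{R}$ define $$A_t^{\eta}:=\bigcap_{\tau>0}\overline{\bigcup_{s\le-\tau}\Phi\big(t,s,\mathcal{N}_\eta(A_-)\big)}.$$ Then there is $\tilde\eta>0$ such that the nonautonomous set $\{A^\eta_t\}_{t\in\mathbb{R}}$ is independent of $\eta$ for $\eta\in(0,\tilde\eta]$, i.e. $A_t^\eta=A_t^{\eta'}$ for all $t\in\mathbb{R}$ and all $\eta,\eta'\in(0,\tilde\eta]$.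
   Context: A parameter shift from $\lambda_-$ to $\lambda_+$ is a smooth $\Lambda:\mathbb{R}\to(\lambda_-,\lambda_+)$ with $\lim_{\tau\to\pm\infty}\Lambda(\tau)=\lambda_\pm$ and $\lim_{\tau\to\pm\infty}\Lambda'(\tau)=0$. Solutions are assumed to exist for all time; $\Phi(t,s,x_0)$ is the value at time $t$ of the solution with $x(s)=x_0$. $d(X,Y)=\sup_{x\in X}\inf_{y\in Y}\|x-y\|$ and $\mathcal{N}_\eta(M)=\{x: d(x,M)<\eta\}$. A compact $\phi_-$-invariant set $M$ is asymptotically stable if (i) for every $\epsilon>0$ there is $\delta>0$ with $d(\phi_-(t,y),M)<\epsilon$ for all $t>0$, $y\in\mathcal{N}_\delta(M)$, and (ii) there is $\eta>0$ with $\lim_{t\to\infty}d(\phi_-(t,y),M)=0$ for all $y\in\mathcal{N}_\eta(M)$. *)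

theory Defs
  imports "HOL-Analysis.Analysis"
begin

definition C1_map :: "('a::real_normed_vector \<Rightarrow> 'b::real_normed_vector) \<Rightarrow> bool" where
  "C1_map f \<longleftrightarrow> (\<exists>f'. (\<forall>z. (f has_derivative blinfun_apply (f' z)) (at z)) \<and> continuous_on UNIV f')"

definition smooth_real :: "(real \<Rightarrow> real) \<Rightarrow> bool" where
  "smooth_real L \<longleftrightarrow> (\<exists>D::nat \<Rightarrow> real \<Rightarrow> real. D 0 = L \<and>
      (\<forall>k t. (D k has_real_derivative D (Suc k) t) (at t)))"

definition parameter_shift :: "(real \<Rightarrow> real) \<Rightarrow> real \<Rightarrow> real \<Rightarrow> bool" where
  "parameter_shift L lm lp \<longleftrightarrow> smooth_real L \<and> (\<forall>t. lm < L t \<and> L t < lp) \<and>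
     (L \<longlongrightarrow> lm) at_bot \<and> (L \<longlongrightarrow> lp) at_top \<and>
     (deriv L \<longlongrightarrow> 0) at_bot \<and> (deriv L \<longlongrightarrow> 0) at_top"

definition pdist :: "'a::real_normed_vector \<Rightarrow> 'a set \<Rightarrow> real" where
  "pdist x M = (INF y\<in>M. norm (x - y))"

definition nbhd :: "real \<Rightarrow> 'a::real_normed_vector set \<Rightarrow> 'a set" where
  "nbhd eta M = {x. pdist x M < eta}"

definition flow_invariant :: "(real \<Rightarrow> 'a \<Rightarrow> 'a) \<Rightarrow> 'a set \<Rightarrow> bool" where
  "flow_invariant phi M \<longleftrightarrow> (\<forall>t. phi t ` M = M)"

definition asymp_stable :: "(real \<Rightarrow> 'a::real_normed_vector \<Rightarrow> 'a) \<Rightarrow> 'a set \<Rightarrow> bool" where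
  "asymp_stable phi M \<longleftrightarrow> compact M \<and> flow_invariant phi M \<and>
     (\<forall>\<epsilon>>0. \<exists>\<delta>>0. \<forall>y\<in>nbhd \<delta> M. \<forall>t>0. pdist (phi t y) M < \<epsilon>) \<and>
     (\<exists>\<eta>>0. \<forall>y\<in>nbhd \<eta> M. ((\<lambda>t. pdist (phi t y) M) \<longlongrightarrow> 0) at_top)"

definition pullback_set ::
  "(real \<Rightarrow> real \<Rightarrow> 'a::real_normed_vector \<Rightarrow> 'a) \<Rightarrow> 'a set \<Rightarrow> real \<Rightarrow> real \<Rightarrow> 'a set" where
  "pullback_set Phi A eta t =
     (\<Inter>\<tau>\<in>{0<..}. closure (\<Union>s\<in>{..-\<tau>}. Phi t s ` nbhd eta A))"

end

theory Submission
  imports Defs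
begin


lemma C1_lip:
  fixes f :: "'a::euclidean_space \<Rightarrow> 'b::real_normed_vector"
  assumes "C1_map f"
  shows "\<exists>M\<ge>0. \<forall>u\<in>cball 0 K. \<forall>v\<in>cball 0 K. norm (f u - f v) \<le> M * norm (u - v)"
proof -
  obtain f' where d: "\<And>z. (f has_derivative blinfun_apply (f' z)) (at z)" and c: "continuous_on UNIV f'"
    using assms unfolding C1_map_def by blast
  have "compact (f' ` cball 0 K)"
    by (rule compact_continuous_image[OF continuous_on_subset[OF c] compact_cball]) auto
  then obtain B where B: "\<And>z. z \<in> cball 0 K \<Longrightarrow> norm (f' z) \<le> B"
    by (meson bounded_iff compact_imp_bounded image_eqI)
  show ?thesis
  proof (intro exI[of _ "max B 0"] conjI ballI)
    fix u v :: 'a assume uv: "u \<in> cball (0::'a) K" "v \<in> cball 0 K"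
    show "norm (f u - f v) \<le> max B 0 * norm (u - v)"
      apply (rule differentiable_bound[OF convex_cball[of 0 K], where f'="\<lambda>z. blinfun_apply (f' z)"])
      using uv B by (auto intro: has_derivative_at_withinI[OF d] simp: norm_blinfun.rep_eq[symmetric] max.coboundedI1)
  qed simp
qed

lemma sq_deriv:
  fixes w :: "real \<Rightarrow> 'a::real_inner"
  assumes "(w has_vector_derivative w') (at t)"
  shows "((\<lambda>t. w t \<bullet> w t) has_real_derivative 2 * (w t \<bullet> w')) (at t)"
proof -
  have "((\<lambda>t. w t \<bullet> w t) has_derivative (\<lambda>h. w t \<bullet> (h *\<^sub>R w') + (h *\<^sub>R w') \<bullet> w t)) (at t)"
    using assms unfolding has_vector_derivative_def by (intro has_derivative_inner)
  then show ?thesis unfolding has_field_derivative_def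
    by (rule has_derivative_eq_rhs) (auto simp: inner_commute algebra_simps fun_eq_iff)
qed



lemma cmp:
  fixes f :: "('a::euclidean_space \<times> real) \<Rightarrow> 'a"
  assumes f: "C1_map f" and ab: "a \<le> b"
    and zd: "\<And>t. (z has_vector_derivative f (z t, q t)) (at t)"
    and qc: "continuous_on {a..b} q" and e: "e > 0"
  shows "\<exists>d>0. \<forall>x p. (\<forall>t. (x has_vector_derivative f (x t, p t)) (at t)) \<longrightarrow>
            norm (x a - z a) < d \<longrightarrow> (\<forall>t\<in>{a..b}. \<bar>p t - q t\<bar> < d) \<longrightarrow>
            (\<forall>t\<in>{a..b}. norm (x t - z t) < e)"
proof -
  have zc: "continuous_on {a..b} z"
    by (intro continuous_at_imp_continuous_on ballI has_vector_derivative_continuous[OF zd])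
  obtain R where R: "\<And>t. t \<in> {a..b} \<Longrightarrow> norm (z t) \<le> R"
    using compact_imp_bounded[OF compact_continuous_image[OF zc compact_Icc]]
    by (meson bounded_iff image_eqI)
  obtain Q where Q: "\<And>t. t \<in> {a..b} \<Longrightarrow> norm (q t) \<le> Q"
    using compact_imp_bounded[OF compact_continuous_image[OF qc compact_Icc]]
    by (meson bounded_iff image_eqI)
  obtain M where M0: "M \<ge> 0" and M: "\<And>u v. u \<in> cball 0 (R+Q+2) \<Longrightarrow> v \<in> cball 0 (R+Q+2) \<Longrightarrow>
      norm (f u - f v) \<le> M * norm (u - v)"
    using C1_lip[OF f, of "R+Q+2"] by blast
  define c where "c = 3*M+1"
  define e' where "e' = min e 1"
  define E where "E = exp (c*(b-a))"
  define d where "d = e' / (2 * E)"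
  have c0: "c > 0" using M0 by (simp add: c_def)
  have e'0: "e' > 0" "e' \<le> 1" "e' \<le> e" using e by (auto simp: e'_def)
  have E1: "E \<ge> 1" using c0 ab by (simp add: E_def)
  have d0: "d > 0" using e'0 E1 by (simp add: d_def)
  have de: "d \<le> e' / 2" using e'0 E1 unfolding d_def by (simp add: divide_le_eq mult_le_cancel_left1)
  show ?thesis
  proof (intro exI[of _ d] conjI allI impI d0)
    fix x p
    assume xd: "\<forall>t. (x has_vector_derivative f (x t, p t)) (at t)"
      and x0: "norm (x a - z a) < d" and pq: "\<forall>t\<in>{a..b}. \<bar>p t - q t\<bar> < d"
    have xc: "continuous_on {a..b} x"
      by (intro continuous_at_imp_continuous_on ballI has_vector_derivative_continuous) (use xd in blast)
    show "\<forall>t\<in>{a..b}. norm (x t - z t) < e"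
    proof (rule ccontr)
      assume "\<not> ?thesis"
      then obtain t0 where t0: "t0 \<in> {a..b}" "e' \<le> norm (x t0 - z t0)"
        using e'0 by force
      define Bad where "Bad = {a..b} \<inter> (\<lambda>t. norm (x t - z t)) -` {e'..}"
      have cB: "closed Bad" unfolding Bad_def
        by (intro continuous_closed_preimage continuous_intros xc zc)
      have t0B: "t0 \<in> Bad" using t0 by (simp add: Bad_def)
      have bB: "bdd_below Bad" by (auto simp: Bad_def bdd_below_def)
      define t1 where "t1 = Inf Bad"
      have t1B: "t1 \<in> Bad" unfolding t1_def using closed_contains_Inf[OF _ bB cB] t0B by blast
      have t1ab: "a \<le> t1" "t1 \<le> b" using t1B by (auto simp: Bad_def)
      have good: "norm (x t - z t) < e'" if "a \<le> t" "t < t1" for t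
      proof (rule ccontr)
        assume "\<not> ?thesis"
        then have "t \<in> Bad" using that t1ab by (auto simp: Bad_def)
        then have "t1 \<le> t" unfolding t1_def by (rule cInf_lower[OF _ bB])
        then show False using that by simp
      qed
      have at1: "a < t1"
      proof (rule ccontr)
        assume "\<not> a < t1"
        then have "t1 = a" using t1ab by simp
        then show False using t1B x0 de e'0 by (auto simp: Bad_def)
      qed
      define g where "g t = (x t - z t) \<bullet> (x t - z t)" for t
      define g' where "g' t = 2 * ((x t - z t) \<bullet> (f (x t, p t) - f (z t, q t)))" for t
      define h where "h t = (g t + d\<^sup>2) * exp (-c*(t-a))" for t
      have hd: "DERIV h t :> (g' t - c*(g t + d\<^sup>2)) * exp (-c*(t-a))" for t
      proof -
        have "DERIV g t :> g' t" unfolding g_def g'_def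
          by (rule sq_deriv) (intro derivative_intros xd[rule_format] zd)
        then show ?thesis unfolding h_def
          by (auto intro!: derivative_eq_intros simp: algebra_simps)
      qed
      obtain \<xi> where \<xi>: "a < \<xi>" "\<xi> < t1" "h t1 - h a = (t1 - a) * ((g' \<xi> - c*(g \<xi> + d\<^sup>2)) * exp (-c*(\<xi>-a)))"
        using MVT2[OF at1, of h, OF hd] by blast
      have gneg: "g' \<xi> - c*(g \<xi> + d\<^sup>2) \<le> 0"
      proof -
        define u where "u = norm (x \<xi> - z \<xi>)"
        have u: "u < e'" "u \<ge> 0" using good[of \<xi>] \<xi> by (auto simp: u_def)
        have \<xi>ab: "\<xi> \<in> {a..b}" using \<xi> t1ab by auto
        have pqd: "\<bar>p \<xi> - q \<xi>\<bar> < d" using pq \<xi>ab by blast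
        have gu: "g \<xi> = u\<^sup>2" by (simp add: g_def u_def power2_norm_eq_inner)
        have xn: "norm (x \<xi>) \<le> R + 1"
          using norm_triangle_ineq[of "x \<xi> - z \<xi>" "z \<xi>"] R[OF \<xi>ab] u e'0 by (simp add: u_def)
        have pn: "\<bar>p \<xi>\<bar> \<le> Q + 1" using Q[OF \<xi>ab] pqd de e'0 by (simp add: abs_le_iff; linarith)
        have qn: "\<bar>q \<xi>\<bar> \<le> Q" using Q[OF \<xi>ab] by simp
        have Qp: "0 \<le> Q" using Q[OF \<xi>ab] by (meson norm_ge_zero order_trans)
        have m1: "(x \<xi>, p \<xi>) \<in> cball 0 (R+Q+2)"
          using norm_Pair_le[of "x \<xi>" "p \<xi>"] xn pn by simp
        have m2: "(z \<xi>, q \<xi>) \<in> cball 0 (R+Q+2)"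
          using norm_Pair_le[of "z \<xi>" "q \<xi>"] R[OF \<xi>ab] qn Qp by simp
        have "norm (f (x \<xi>, p \<xi>) - f (z \<xi>, q \<xi>)) \<le> M * norm ((x \<xi>, p \<xi>) - (z \<xi>, q \<xi>))"
          by (rule M[OF m1 m2])
        also have "norm ((x \<xi>, p \<xi>) - (z \<xi>, q \<xi>)) \<le> u + d"
          using norm_Pair_le[of "x \<xi> - z \<xi>" "p \<xi> - q \<xi>"] pqd by (simp add: u_def)
        hence "M * norm ((x \<xi>, p \<xi>) - (z \<xi>, q \<xi>)) \<le> M * (u + d)" using M0 by (rule mult_left_mono)
        finally have fb: "norm (f (x \<xi>, p \<xi>) - f (z \<xi>, q \<xi>)) \<le> M * (u + d)" .
        have "g' \<xi> \<le> 2 * (u * norm (f (x \<xi>, p \<xi>) - f (z \<xi>, q \<xi>)))"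
          unfolding g'_def u_def using norm_cauchy_schwarz by simp
        also have "\<dots> \<le> 2 * (u * (M * (u + d)))" using fb u by (simp add: mult_left_mono)
        also have "\<dots> \<le> c * (u\<^sup>2 + d\<^sup>2)"
        proof -
          have "2*u*d \<le> u\<^sup>2 + d\<^sup>2" using sum_squares_bound[of u d] by simp
          hence "M*(2*u*d) \<le> M*(u\<^sup>2 + d\<^sup>2)" using M0 by (rule mult_left_mono)
          moreover have "0 \<le> M*(u*u)" "0 \<le> M*(d*d)" "0 \<le> u*u" "0 \<le> d*d" using M0 by auto
          ultimately show ?thesis unfolding c_def by (simp add: algebra_simps power2_eq_square; linarith)
        qed
        finally show ?thesis using gu by simp
      qed
      have "(t1 - a) * ((g' \<xi> - c*(g \<xi> + d\<^sup>2)) * exp (-c*(\<xi>-a))) \<le> 0"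
        using gneg at1 by (intro mult_nonneg_nonpos mult_nonpos_nonneg) auto
      hence "h t1 \<le> h a" using \<xi>(3) by linarith
      also have "h a < 2 * d\<^sup>2" using x0 d0
        by (simp add: h_def g_def power2_norm_eq_inner[symmetric] power_strict_mono)
      finally have h1: "h t1 < 2 * d\<^sup>2" .
      have "e'\<^sup>2 \<le> g t1" using t1B e'0 unfolding Bad_def g_def power2_norm_eq_inner[symmetric]
        by (auto intro: power_mono)
      hence "e'\<^sup>2 \<le> g t1 + d\<^sup>2" by (smt (verit) zero_le_power2)
      hence "e'\<^sup>2 * exp (-c*(t1-a)) \<le> h t1" unfolding h_def by (rule mult_right_mono) simp
      moreover have "exp (-c*(b-a)) \<le> exp (-c*(t1-a))" using t1ab c0 by (simp add: mult_left_mono)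
      hence "e'\<^sup>2 * exp (-c*(b-a)) \<le> e'\<^sup>2 * exp (-c*(t1-a))" by (simp add: mult_left_mono)
      moreover have "2 * d\<^sup>2 < e'\<^sup>2 * exp (-c*(b-a))"
      proof -
        have ee: "exp (-c*(b-a)) = 1 / E" unfolding E_def by (simp add: exp_minus inverse_eq_divide)
        have "2 * d\<^sup>2 = e'\<^sup>2 / (2 * E * E)" by (simp add: d_def power2_eq_square field_simps)
        also have "\<dots> < e'\<^sup>2 / E" using E1 e'0 by (simp add: frac_less2)
        finally show ?thesis using ee by simp
      qed
      ultimately show False using h1 by linarith
    qed
  qed
qed



lemma pdist_infdist: "M \<noteq> {} \<Longrightarrow> pdist x M = infdist x M"
  by (simp add: pdist_def infdist_notempty dist_norm)

lemma shift_deriv: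
  assumes "(g has_vector_derivative g') (at (s + t))"
  shows "((\<lambda>t. g (s + t)) has_vector_derivative g') (at t)"
proof -
  have "((\<lambda>t. s + t) has_vector_derivative 1) (at t)"
    by (auto intro!: derivative_eq_intros simp: has_vector_derivative_def)
  from vector_diff_chain_at[OF this assms] show ?thesis by (simp add: o_def)
qed

lemma smooth_cont: "smooth_real L \<Longrightarrow> isCont L t"
  unfolding smooth_real_def by (metis DERIV_isCont)

lemma cocycle:
  fixes f :: "('a::euclidean_space \<times> real) \<Rightarrow> 'a"
  assumes f: "C1_map f" and Lc: "\<And>t. isCont L t"
    and Phi_init: "\<And>s x0. Phi s s x0 = x0"
    and Phi_ode: "\<And>s x0 t. ((\<lambda>t. Phi t s x0) has_vector_derivative f (Phi t s x0, L (r * t))) (at t)"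
    and ut: "u \<le> t"
  shows "Phi t u (Phi u s y) = Phi t s y"
proof -
  have qc: "continuous_on {u..t} (\<lambda>\<tau>. L (r * \<tau>))"
    by (intro continuous_at_imp_continuous_on ballI continuous_at_compose[OF _ Lc, unfolded o_def]
        continuous_intros)
  have "norm (Phi t u (Phi u s y) - Phi t s y) < e" if e: "e > 0" for e
  proof -
    obtain d where d: "d > 0" and H: "\<forall>x p. (\<forall>\<tau>. (x has_vector_derivative f (x \<tau>, p \<tau>)) (at \<tau>)) \<longrightarrow>
            norm (x u - Phi u s y) < d \<longrightarrow> (\<forall>\<tau>\<in>{u..t}. \<bar>p \<tau> - L (r*\<tau>)\<bar> < d) \<longrightarrow>
            (\<forall>\<tau>\<in>{u..t}. norm (x \<tau> - Phi \<tau> s y) < e)"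
      using cmp[OF f ut Phi_ode qc e] by blast
    have "\<forall>\<tau>\<in>{u..t}. norm (Phi \<tau> u (Phi u s y) - Phi \<tau> s y) < e"
      using H[rule_format, of "\<lambda>\<tau>. Phi \<tau> u (Phi u s y)" "\<lambda>\<tau>. L (r*\<tau>)"] Phi_ode Phi_init d by auto
    then show ?thesis using ut by auto
  qed
  then have "norm (Phi t u (Phi u s y) - Phi t s y) = 0"
    by (metis norm_ge_zero order_less_irrefl order_le_less)
  then show ?thesis by simp
qed



lemma incl:
  fixes f :: "('a::euclidean_space \<times> real) \<Rightarrow> 'a"
  assumes f: "C1_map f" and Lc: "\<And>t. isCont L t" and Lbot: "(L \<longlongrightarrow> lm) at_bot"
    and r_pos: "r > 0"
    and Phi_init: "\<And>s x0. Phi s s x0 = x0"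
    and Phi_ode: "\<And>s x0 t. ((\<lambda>t. Phi t s x0) has_vector_derivative f (Phi t s x0, L (r * t))) (at t)"
    and phim_init: "\<And>y. phim 0 y = y"
    and phim_ode: "\<And>y t. ((\<lambda>t. phim t y) has_vector_derivative f (phim t y, lm)) (at t)"
    and Am_ne: "Am \<noteq> {}" and Am_c: "compact Am"
    and eb: "\<eta>b > 0" and attr: "\<forall>y\<in>nbhd \<eta>b Am. ((\<lambda>t. pdist (phim t y) Am) \<longlongrightarrow> 0) at_top"
    and \<eta>: "\<eta> > 0" and \<eta>': "0 < \<eta>'" "\<eta>' < \<eta>b"
  shows "pullback_set Phi Am \<eta>' t \<subseteq> pullback_set Phi Am \<eta> t"
proof
  fix x assume xin: "x \<in> pullback_set Phi Am \<eta>' t"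
  have pd: "pdist y Am = infdist y Am" for y using Am_ne by (rule pdist_infdist)
  obtain R0 where R0: "\<And>a. a \<in> Am \<Longrightarrow> norm a \<le> R0"
    using compact_imp_bounded[OF Am_c] bounded_iff by blast
  have nb: "norm y \<le> R0 + \<eta>'" if "y \<in> nbhd \<eta>' Am" for y
  proof -
    obtain a where a: "a \<in> Am" "infdist y Am = dist y a"
      using infdist_attains_inf[OF compact_imp_closed[OF Am_c] Am_ne] by blast
    have "dist y a < \<eta>'" using that a by (simp add: nbhd_def pd)
    then show ?thesis using R0[OF a(1)] norm_triangle_ineq[of "y - a" a] by (simp add: dist_norm)
  qed
  show "x \<in> pullback_set Phi Am \<eta> t"
    unfolding pullback_set_def
  proof (rule InterI, clarsimp)
    fix \<tau>0 :: real assume \<tau>0: "0 < \<tau>0"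
    show "x \<in> closure (\<Union>s\<in>{..-\<tau>0}. Phi t s ` nbhd \<eta> Am)"
      unfolding closure_approachable
    proof (intro allI impI)
      fix e0 :: real assume e0: "e0 > 0"
      have "\<forall>k::nat. \<exists>s y. s \<le> - (real k + 1) \<and> y \<in> nbhd \<eta>' Am \<and> dist (Phi t s y) x < e0"
      proof
        fix k :: nat
        have "x \<in> closure (\<Union>s\<in>{..-(real k + 1)}. Phi t s ` nbhd \<eta>' Am)"
        proof -
          have "\<forall>a\<in>{0<..}. x \<in> closure (\<Union>s\<in>{..-a}. Phi t s ` nbhd \<eta>' Am)"
            using xin by (simp add: pullback_set_def)
          from bspec[OF this, of "real k + 1"] show ?thesis by simp
        qed
        then obtain w where "w \<in> (\<Union>s\<in>{..-(real k + 1)}. Phi t s ` nbhd \<eta>' Am)" "dist w x < e0"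
          using e0 unfolding closure_approachable by blast
        then show "\<exists>s y. s \<le> - (real k + 1) \<and> y \<in> nbhd \<eta>' Am \<and> dist (Phi t s y) x < e0" by auto
      qed
      then obtain S Y where SY: "\<And>k. S k \<le> - (real k + 1)" "\<And>k. Y k \<in> nbhd \<eta>' Am"
          "\<And>k. dist (Phi t (S k) (Y k)) x < e0"
        by metis
      have "\<forall>k. Y k \<in> cball 0 (R0 + \<eta>')" using nb SY(2) by simp
      then obtain ys \<sigma> where ys: "ys \<in> cball 0 (R0 + \<eta>')" and \<sigma>: "strict_mono \<sigma>"
        and lim: "(Y \<circ> \<sigma>) \<longlonglongrightarrow> ys"
        using seq_compactE[OF compact_imp_seq_compact[OF compact_cball]] by blast
      have "infdist ys Am \<le> \<eta>'"
      proof (rule tendsto_upperbound[OF tendsto_infdist[OF lim]])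
        show "\<forall>\<^sub>F k in sequentially. infdist ((Y \<circ> \<sigma>) k) Am \<le> \<eta>'"
          using SY(2) by (auto simp: nbhd_def pd less_imp_le)
      qed simp
      then have ysb: "ys \<in> nbhd \<eta>b Am" using \<eta>' by (simp add: nbhd_def pd)
      have "\<forall>e>0. \<forall>\<^sub>F T in at_top. infdist (phim T ys) Am < e"
        using attr[rule_format, OF ysb] unfolding pd
        by (auto simp: tendsto_iff dist_real_def infdist_nonneg)
      then have "\<forall>\<^sub>F T in at_top. infdist (phim T ys) Am < \<eta>/2" using \<eta> by (meson half_gt_zero)
      then obtain T0 where T0: "\<And>T. T \<ge> T0 \<Longrightarrow> infdist (phim T ys) Am < \<eta>/2"
        by (auto simp: eventually_at_top_linorder)
      define T where "T = max T0 0"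
      have T: "T \<ge> 0" "infdist (phim T ys) Am < \<eta>/2" using T0 by (auto simp: T_def)
      obtain d where d: "d > 0" and H: "\<forall>x p. (\<forall>\<tau>. (x has_vector_derivative f (x \<tau>, p \<tau>)) (at \<tau>)) \<longrightarrow>
            norm (x 0 - phim 0 ys) < d \<longrightarrow> (\<forall>\<tau>\<in>{0..T}. \<bar>p \<tau> - lm\<bar> < d) \<longrightarrow>
            (\<forall>\<tau>\<in>{0..T}. norm (x \<tau> - phim \<tau> ys) < \<eta>/2)"
        using cmp[OF f T(1), of "\<lambda>\<tau>. phim \<tau> ys" "\<lambda>_. lm" "\<eta>/2"] phim_ode \<eta> by auto
      have "\<forall>\<^sub>F v in at_bot. dist (L v) lm < d" using Lbot d by (rule tendstoD)
      then obtain U where U: "\<And>v. v \<le> U \<Longrightarrow> \<bar>L v - lm\<bar> < d"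
        by (auto simp: eventually_at_bot_linorder dist_real_def)
      have "\<forall>\<^sub>F k in sequentially. dist ((Y \<circ> \<sigma>) k) ys < d" using lim d by (rule tendstoD)
      then obtain K1 where K1: "\<And>k. k \<ge> K1 \<Longrightarrow> dist (Y (\<sigma> k)) ys < d"
        by (auto simp: eventually_sequentially)
      define K2 where "K2 = nat \<lceil>T + \<tau>0 + \<bar>t\<bar> + \<bar>U\<bar>/r\<rceil>"
      define k where "k = max K1 K2"
      define s where "s = S (\<sigma> k)"
      define y where "y = Y (\<sigma> k)"
      have k1: "real k \<le> real (\<sigma> k)" using seq_suble[OF \<sigma>, of k] by simp
      have k2: "T + \<tau>0 + \<bar>t\<bar> + \<bar>U\<bar>/r \<le> real k"
        unfolding k_def K2_def by linarith
      have k3: "s \<le> - (real (\<sigma> k) + 1)" using SY(1)[of "\<sigma> k"] unfolding s_def .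
      have k4: "0 \<le> \<bar>U\<bar>/r" "-\<bar>t\<bar> \<le> t" using r_pos by auto
      have k5: "(- \<bar>U\<bar>)/r \<le> U/r" using r_pos by (intro divide_right_mono) auto
      have k6: "(- \<bar>U\<bar>)/r = - (\<bar>U\<bar>/r)" by simp
      have sk: "s + T \<le> - \<tau>0" "s + T \<le> t" "s + T \<le> U / r"
        using k1 k2 k3 k4 k5 k6 \<tau>0 by linarith+
      have yd: "dist y ys < d" using K1 unfolding y_def k_def by simp
      have close: "norm (Phi (s + T) s y - phim T ys) < \<eta>/2"
      proof -
        have D1: "\<forall>\<tau>. ((\<lambda>\<tau>. Phi (s + \<tau>) s y) has_vector_derivative f (Phi (s + \<tau>) s y, L (r * (s + \<tau>)))) (at \<tau>)"
          by (intro allI shift_deriv[OF Phi_ode])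
        have D2: "norm (Phi (s + 0) s y - phim 0 ys) < d" using yd Phi_init phim_init by (simp add: dist_norm)
        have D3: "\<forall>\<tau>\<in>{0..T}. \<bar>L (r * (s + \<tau>)) - lm\<bar> < d"
        proof
          fix \<tau> assume "\<tau> \<in> {0..T}"
          then have "s + \<tau> \<le> U / r" using sk by auto
          then have "r * (s + \<tau>) \<le> U" using r_pos by (simp add: pos_le_divide_eq mult.commute)
          then show "\<bar>L (r * (s + \<tau>)) - lm\<bar> < d" by (rule U)
        qed
        have "\<forall>\<tau>\<in>{0..T}. norm (Phi (s + \<tau>) s y - phim \<tau> ys) < \<eta>/2"
          using H[THEN spec[of _ "\<lambda>\<tau>. Phi (s + \<tau>) s y"], THEN spec[of _ "\<lambda>\<tau>. L (r * (s + \<tau>))"]] D1 D2 D3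
          by simp
        then show ?thesis using T(1) by auto
      qed
      have "infdist (Phi (s + T) s y) Am < \<eta>"
        using infdist_triangle[of "Phi (s + T) s y" Am "phim T ys"] close T(2)
        by (simp add: dist_norm)
      then have win: "Phi (s + T) s y \<in> nbhd \<eta> Am" by (simp add: nbhd_def pd)
      have "Phi t (s + T) (Phi (s + T) s y) = Phi t s y"
        by (rule cocycle[OF f Lc Phi_init Phi_ode sk(2)])
      then have "Phi t s y \<in> (\<Union>s\<in>{..-\<tau>0}. Phi t s ` nbhd \<eta> Am)"
        using win sk(1) by (metis UN_I atMost_iff image_eqI)
      moreover have "dist (Phi t s y) x < e0" using SY(3) by (simp add: s_def y_def)
      ultimately show "\<exists>w\<in>(\<Union>s\<in>{..-\<tau>0}. Phi t s ` nbhd \<eta> Am). dist w x < e0" by blast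
    qed
  qed
qed


theorem lemma2p4:
  fixes f :: "((real^'n) \<times> real) \<Rightarrow> real^'n"
    and L :: "real \<Rightarrow> real"
    and lm lp r :: real
    and Phi :: "real \<Rightarrow> real \<Rightarrow> real^'n \<Rightarrow> real^'n"
    and phim :: "real \<Rightarrow> real^'n \<Rightarrow> real^'n"
    and Am :: "(real^'n) set"
  assumes f_C1: "C1_map f"
    and lm_lp: "lm < lp"
    and shift: "parameter_shift L lm lp"
    and r_pos: "r > 0"
    and Phi_init: "\<And>s x0. Phi s s x0 = x0"
    and Phi_ode: "\<And>s x0 t. ((\<lambda>t. Phi t s x0) has_vector_derivative
                              f (Phi t s x0, L (r * t))) (at t)"
    and phim_init: "\<And>y. phim 0 y = y"
    and phim_ode: "\<And>y t. ((\<lambda>t. phim t y) has_vector_derivative f (phim t y, lm)) (at t)"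
    and Am_ne: "Am \<noteq> {}"
    and Am_stable: "asymp_stable phim Am"
  shows "\<exists>\<eta>0>0. \<forall>\<eta>\<in>{0<..\<eta>0}. \<forall>\<eta>'\<in>{0<..\<eta>0}. \<forall>t.
           pullback_set Phi Am \<eta> t = pullback_set Phi Am \<eta>' t"
  proof -
  have Amc: "compact Am" using Am_stable by (simp add: asymp_stable_def)
  obtain \<eta>b where eb: "\<eta>b > 0" and attr: "\<forall>y\<in>nbhd \<eta>b Am. ((\<lambda>t. pdist (phim t y) Am) \<longlongrightarrow> 0) at_top"
    using Am_stable unfolding asymp_stable_def by blast
  have Lc: "\<And>t. isCont L t" using shift by (intro smooth_cont) (simp add: parameter_shift_def)
  have Lbot: "(L \<longlongrightarrow> lm) at_bot" using shift by (simp add: parameter_shift_def)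
  note I = incl[OF f_C1 Lc Lbot r_pos Phi_init Phi_ode phim_init phim_ode Am_ne Amc eb attr]
  show ?thesis
  proof (intro exI[of _ "\<eta>b/2"] conjI ballI allI)
    show "\<eta>b/2 > 0" using eb by simp
    fix \<eta> \<eta>' t assume a: "\<eta> \<in> {0<..\<eta>b/2}" "\<eta>' \<in> {0<..\<eta>b/2}"
    show "pullback_set Phi Am \<eta> t = pullback_set Phi Am \<eta>' t"
      using a eb by (intro subset_antisym I) auto
  qed
qed

end
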